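(* Let $\{(x_i,y_i)\}_{i=1}^n\subset\mathcal X\times\mathcal Y$ be a dataset and $\alpha\in(0,1)$. Let $F:\mathcal X\to\mathcal Y$ be a deterministic classifier and let $F'$ be a randomized classifier (for each $x$, $F'(x)$ is a $\mathcal Y$-valued random variable) whose average zero-one loss equals that of $F$, i.e. $$\frac1n\sum_{i=1}^n \Pr(F'(x_i)\neq y_i)=\frac1n\sum_{i=1}^n \mathbf 1_{\{F(x_i)\neq y_i\}}.$$ Define $$\mathrm{CVaR}_\alpha(F)=\max_{w\in\Delta_n,\ w_i\le\frac1{\alpha n}\ \forall i}\sum_{i=1}^n w_i\mathbf 1_{\{F(x_i)\neq y_i\}},\qquad \mathrm{CVaR}_\alpha(F')=\max_{w\in\Delta_n,\ w_i\le\frac1{\alpha n}\ \forall i}\sum_{i=1}^n w_i\Pr(F'(x_i)\neq y_i),$$ where $\Delta_n=\{w\in\mathbb R^n:w_i\ge0,\sum_iw_i=1\}$. Then $\mathrm{CVaR}_\alpha(F')\le \mathrm{CVaR}_\alpha(F)$.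
   Context: The $\alpha$-CVaR zero-one loss measures the average zero-one loss over the worst $\alpha$ fraction of the dataset; for a randomized classifier the per-sample loss is the probability of misclassification. *)

theory Defs
  imports "HOL-Probability.Probability"
begin

text \<open>Data indexed by 0..<n. Feasible weights: w in the simplex with w_i <= 1/(alpha n).\<close>
definition cvar_weights :: "nat \<Rightarrow> real \<Rightarrow> (nat \<Rightarrow> real) set" where
  "cvar_weights n \<alpha> = {w. (\<forall>i<n. 0 \<le> w i \<and> w i \<le> 1 / (\<alpha> * real n)) \<and> (\<Sum>i<n. w i) = 1}"

text \<open>CVaR of per-sample losses l: max (here Sup; the maximum is attained) of weighted loss.\<close>
definition cvar :: "nat \<Rightarrow> real \<Rightarrow> (nat \<Rightarrow> real) \<Rightarrow> real" where
  "cvar n \<alpha> l = Sup ((\<lambda>w. \<Sum>i<n. w i * l i) ` cvar_weights n \<alpha>)"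

definition zo_loss :: "('x \<Rightarrow> 'y) \<Rightarrow> (nat \<Rightarrow> 'x) \<Rightarrow> (nat \<Rightarrow> 'y) \<Rightarrow> nat \<Rightarrow> real" where
  "zo_loss F x y i = (if F (x i) \<noteq> y i then 1 else 0)"

text \<open>Misclassification probability of a randomized classifier (law of F'(x) is a probability measure on Y).\<close>
definition rand_loss :: "('x \<Rightarrow> 'y measure) \<Rightarrow> (nat \<Rightarrow> 'x) \<Rightarrow> (nat \<Rightarrow> 'y) \<Rightarrow> nat \<Rightarrow> real" where
  "rand_loss F' x y i = measure (F' (x i)) (space (F' (x i)) - {y i})"

end

theory Submission
  imports Defs
begin

lemma weighted_le_one:
  assumes "w \<in> cvar_weights n \<alpha>" "\<And>i. i < n \<Longrightarrow> l i \<le> 1"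
  shows "(\<Sum>i<n. w i * l i) \<le> 1"
proof -
  have "(\<Sum>i<n. w i * l i) \<le> (\<Sum>i<n. w i)"
    apply (rule sum_mono) using assms by (auto simp: cvar_weights_def intro: mult_left_le)
  thus ?thesis using assms by (simp add: cvar_weights_def)
qed

lemma weighted_le_avg:
  assumes "w \<in> cvar_weights n \<alpha>" "\<And>i. i < n \<Longrightarrow> 0 \<le> l i"
  shows "(\<Sum>i<n. w i * l i) \<le> (\<Sum>i<n. l i) / (\<alpha> * real n)"
proof -
  have "(\<Sum>i<n. w i * l i) \<le> (\<Sum>i<n. (1 / (\<alpha> * real n)) * l i)"
  proof (rule sum_mono)
    fix i assume "i \<in> {..<n}"
    thus "w i * l i \<le> (1 / (\<alpha> * real n)) * l i"
      using assms by (intro mult_right_mono) (auto simp: cvar_weights_def)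
  qed
  thus ?thesis by (simp add: sum_divide_distrib[symmetric])
qed

lemma zo_01: "zo_loss F x y i * zo_loss F x y i = zo_loss F x y i"
  "zo_loss F x y i * (1 - zo_loss F x y i) = 0"
  "0 \<le> zo_loss F x y i" "zo_loss F x y i \<le> 1"
  by (auto simp: zo_loss_def)

theorem proposition2:
  fixes n :: nat and \<alpha> :: real
    and x :: "nat \<Rightarrow> 'x" and y :: "nat \<Rightarrow> 'y"
    and F :: "'x \<Rightarrow> 'y" and F' :: "'x \<Rightarrow> 'y measure"
  assumes "n \<ge> 1"
    and "0 < \<alpha>" and "\<alpha> < 1"
    and "\<And>i. i < n \<Longrightarrow> prob_space (F' (x i))"
    and "\<And>i. i < n \<Longrightarrow> space (F' (x i)) - {y i} \<in> sets (F' (x i))"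
    and "(1 / real n) * (\<Sum>i<n. rand_loss F' x y i) = (1 / real n) * (\<Sum>i<n. zo_loss F x y i)"
  shows "cvar n \<alpha> (rand_loss F' x y) \<le> cvar n \<alpha> (zo_loss F x y)"
proof -
  define z where "z = zo_loss F x y"
  define r where "r = rand_loss F' x y"
  define S where "S = (\<Sum>i<n. z i)"
  have npos: "real n > 0" using assms(1) by simp
  have anpos: "\<alpha> * real n > 0" using npos assms(2) by simp
  have sumr: "(\<Sum>i<n. r i) = S" using assms(6) npos unfolding r_def S_def z_def by simp
  have r01: "0 \<le> r i \<and> r i \<le> 1" if "i < n" for i
  proof -
    interpret prob_space "F' (x i)" using assms(4) that .
    show ?thesis unfolding r_def rand_loss_def by simp
  qed
  have z01: "0 \<le> z i" "z i \<le> 1" "z i * z i = z i" "z i * (1 - z i) = 0" for i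
    unfolding z_def using zo_01 by auto
  have S0: "0 \<le> S" unfolding S_def by (rule sum_nonneg) (use z01 in auto)
  have S1: "S \<le> real n"
  proof -
    have "S \<le> (\<Sum>i<n. 1)" unfolding S_def by (rule sum_mono) (use z01 in auto)
    thus ?thesis by simp
  qed
  have sum1z: "(\<Sum>i<n. 1 - z i) = real n - S" unfolding S_def by (simp add: sum_subtractf)
  have ex: "\<exists>w \<in> cvar_weights n \<alpha>. min 1 (S / (\<alpha> * real n)) \<le> (\<Sum>i<n. w i * z i)"
  proof (cases "S \<ge> \<alpha> * real n")
    case True
    define w where "w i = z i / S" for i
    have Spos: "S > 0" using True anpos by linarith
    have "w \<in> cvar_weights n \<alpha>"
      unfolding cvar_weights_def mem_Collect_eq
    proof (intro conjI allI impI)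
      fix i assume "i < n"
      show "0 \<le> w i" unfolding w_def using z01 Spos by simp
      have "w i \<le> 1 / S" unfolding w_def using z01(2)[of i] Spos by (simp add: divide_right_mono)
      also have "\<dots> \<le> 1 / (\<alpha> * real n)" using True anpos by (simp add: frac_le)
      finally show "w i \<le> 1 / (\<alpha> * real n)" .
    next
      show "(\<Sum>i<n. w i) = 1" unfolding w_def S_def using Spos S_def
        by (simp add: sum_divide_distrib[symmetric])
    qed
    moreover have "(\<Sum>i<n. w i * z i) = 1"
    proof -
      have "(\<Sum>i<n. w i * z i) = (\<Sum>i<n. z i / S)" unfolding w_def
        by (rule sum.cong) (use z01 in \<open>auto simp: field_simps\<close>)
      also have "\<dots> = 1" using Spos unfolding S_def by (simp add: sum_divide_distrib[symmetric])
      finally show ?thesis .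
    qed
    ultimately show ?thesis by force
  next
    case False
    define a where "a = 1 / (\<alpha> * real n)"
    define c where "c = (1 - S * a) / (real n - S)"
    define w where "w i = z i * a + (1 - z i) * c" for i
    have nS: "real n - S > 0" using False assms(3) npos
      by (smt (verit) mult_less_cancel_right2)
    have Sa: "S * a < 1" using False anpos unfolding a_def by (simp add: field_simps)
    have c0: "0 \<le> c" unfolding c_def using Sa nS by simp
    have ca: "c \<le> a"
    proof -
      have na: "real n * a = 1 / \<alpha>" unfolding a_def using npos by simp
      have "1 \<le> 1 / \<alpha>" using assms(2,3) by simp
      hence "1 - S * a \<le> (real n - S) * a" using na by (simp add: algebra_simps)
      thus ?thesis unfolding c_def using nS by (simp add: divide_le_eq mult.commute)
    qed
    have a0: "a \<ge> 0" unfolding a_def using anpos by simp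
    have "w \<in> cvar_weights n \<alpha>"
      unfolding cvar_weights_def mem_Collect_eq
    proof (intro conjI allI impI)
      fix i assume "i < n"
      show "0 \<le> w i" unfolding w_def using z01[of i] a0 c0 by simp
      have "w i \<le> z i * a + (1 - z i) * a" unfolding w_def
        using z01[of i] ca by (simp add: mult_left_mono)
      also have "z i * a + (1 - z i) * a = a" by (simp add: algebra_simps)
      finally show "w i \<le> 1 / (\<alpha> * real n)" unfolding a_def .
    next
      have "(\<Sum>i<n. w i) = S * a + (real n - S) * c" unfolding w_def
        by (simp add: sum.distrib sum_distrib_right[symmetric] sum1z S_def)
      also have "\<dots> = 1" unfolding c_def using nS by simp
      finally show "(\<Sum>i<n. w i) = 1" .
    qed
    moreover have "(\<Sum>i<n. w i * z i) = S * a"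
    proof -
      have "(\<Sum>i<n. w i * z i) = (\<Sum>i<n. z i * a)" unfolding w_def
      proof (rule sum.cong)
        fix i show "(z i * a + (1 - z i) * c) * z i = z i * a"
          using z01(3)[of i] by (simp add: algebra_simps) (auto)
      qed simp
      thus ?thesis unfolding S_def by (simp add: sum_distrib_right)
    qed
    ultimately show ?thesis unfolding a_def by force
  qed
  then obtain w0 where w0: "w0 \<in> cvar_weights n \<alpha>"
    "min 1 (S / (\<alpha> * real n)) \<le> (\<Sum>i<n. w0 i * z i)" by blast
  have bdd: "bdd_above ((\<lambda>w. \<Sum>i<n. w i * z i) ` cvar_weights n \<alpha>)"
    by (rule bdd_aboveI[of _ 1]) (use weighted_le_one z01 in blast)
  have "cvar n \<alpha> r \<le> min 1 (S / (\<alpha> * real n))"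
    unfolding cvar_def
  proof (rule cSup_least)
    show "(\<lambda>w. \<Sum>i<n. w i * r i) ` cvar_weights n \<alpha> \<noteq> {}" using w0(1) by blast
  next
    fix v assume "v \<in> (\<lambda>w. \<Sum>i<n. w i * r i) ` cvar_weights n \<alpha>"
    then obtain w where w: "w \<in> cvar_weights n \<alpha>" "v = (\<Sum>i<n. w i * r i)" by blast
    have "v \<le> 1" using weighted_le_one[OF w(1)] r01 w(2) by blast
    moreover have "v \<le> S / (\<alpha> * real n)" using weighted_le_avg[OF w(1)] r01 w(2) sumr by metis
    ultimately show "v \<le> min 1 (S / (\<alpha> * real n))" by simp
  qed
  also have "\<dots> \<le> (\<Sum>i<n. w0 i * z i)" by (rule w0(2))
  also have "\<dots> \<le> cvar n \<alpha> z" unfolding cvar_def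
    by (rule cSup_upper) (use w0(1) bdd in auto)
  finally show ?thesis unfolding r_def z_def .
qed

end
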